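(* Let $\Theta$ be a hypergraph with at least $d+2$ vertices. If a generic framework $(p,\Theta)$ with $p:V(\Theta)\to\mathbb{R}^d$ is affinely rigid in $\mathbb{R}^d$, then $(p,\Theta)$ is universally Euclidean rigid.
   Context: A hypergraph $\Theta$ has a finite vertex set $V$ and hyperedges that are subsets of $V$; a framework $(p,\Theta)$ pairs it with a configuration $p:V\to\mathbb{R}^d$. A configuration is generic if its coordinates satisfy no nonzero polynomial equation with rational coefficients. For a group $G$ acting on $\mathbb{R}^k$, frameworks $(p,\Theta),(q,\Theta)$ in $\mathbb{R}^k$ are $G$-equivalent if for each hyperedge $h$ there is $g_h\in G$ with $g_h(p(u))=q(u)$ for all $u\in h$, and $G$-congruent if one $g\in G$ satisfies $g(p(u))=q(u)$ for all $u\in V$. $(p,\Theta)$ is affinely rigid in $\mathbb{R}^d$ if every framework in $\mathbb{R}^d$ equivalent to it under the group of invertible affine maps of $\mathbb{R}^d$ is congruent to it under that group. Viewing $\mathbb{R}^d\subset\mathbb{R}^{d'}$ ($d'\ge d$) as the first $d$ coordinates, $(p,\Theta)$ is universally Euclidean rigid if for every $d'\ge d$, every framework $(q,\Theta)$ in $\mathbb{R}^{d'}$ equivalent to it under the Euclidean isometry group of $\mathbb{R}^{d'}$ is congruent to it under that group. *)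

theory Defs
  imports Complex_Main
begin

text \<open>Points of R^k are represented as functions nat => real vanishing at all
  indices >= k; thus R^d is the subset of R^d' given by the first d coordinates.\<close>

definition Rk :: "nat \<Rightarrow> (nat \<Rightarrow> real) set" where
  "Rk k = {x. \<forall>i\<ge>k. x i = 0}"

definition affine_group :: "nat \<Rightarrow> ((nat \<Rightarrow> real) \<Rightarrow> (nat \<Rightarrow> real)) set" where
  "affine_group k = {g. bij_betw g (Rk k) (Rk k) \<and>
     (\<exists>(A :: nat \<Rightarrow> nat \<Rightarrow> real) (b :: nat \<Rightarrow> real). \<forall>x \<in> Rk k. \<forall>i < k.
        g x i = (\<Sum>j<k. A i j * x j) + b i)}"

definition eucl_group :: "nat \<Rightarrow> ((nat \<Rightarrow> real) \<Rightarrow> (nat \<Rightarrow> real)) set" where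
  "eucl_group k = {g. bij_betw g (Rk k) (Rk k) \<and>
     (\<forall>x \<in> Rk k. \<forall>y \<in> Rk k.
        (\<Sum>i<k. (g x i - g y i)^2) = (\<Sum>i<k. (x i - y i)^2))}"

definition hypergraph :: "'v set \<Rightarrow> 'v set set \<Rightarrow> bool" where
  "hypergraph V H \<longleftrightarrow> finite V \<and> (\<forall>h\<in>H. h \<subseteq> V)"

definition config :: "'v set \<Rightarrow> nat \<Rightarrow> ('v \<Rightarrow> nat \<Rightarrow> real) \<Rightarrow> bool" where
  "config V k p \<longleftrightarrow> (\<forall>u\<in>V. p u \<in> Rk k)"

definition G_equivalent ::
  "((nat \<Rightarrow> real) \<Rightarrow> (nat \<Rightarrow> real)) set \<Rightarrow> 'v set set \<Rightarrow>
   ('v \<Rightarrow> nat \<Rightarrow> real) \<Rightarrow> ('v \<Rightarrow> nat \<Rightarrow> real) \<Rightarrow> bool" where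
  "G_equivalent G H p q \<longleftrightarrow> (\<forall>h\<in>H. \<exists>g\<in>G. \<forall>u\<in>h. g (p u) = q u)"

definition G_congruent ::
  "((nat \<Rightarrow> real) \<Rightarrow> (nat \<Rightarrow> real)) set \<Rightarrow> 'v set \<Rightarrow>
   ('v \<Rightarrow> nat \<Rightarrow> real) \<Rightarrow> ('v \<Rightarrow> nat \<Rightarrow> real) \<Rightarrow> bool" where
  "G_congruent G V p q \<longleftrightarrow> (\<exists>g\<in>G. \<forall>u\<in>V. g (p u) = q u)"

text \<open>A polynomial is a finitely supported
  coefficient function on monomials (exponent vectors over the variables V x {..<d}).\<close>
definition generic_config :: "'v set \<Rightarrow> nat \<Rightarrow> ('v \<Rightarrow> nat \<Rightarrow> real) \<Rightarrow> bool" where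
  "generic_config V d p \<longleftrightarrow>
    (\<forall>c :: ('v \<times> nat \<Rightarrow> nat) \<Rightarrow> rat.
       finite {m. c m \<noteq> 0} \<and>
       (\<forall>m. c m \<noteq> 0 \<longrightarrow> (\<forall>w. m w \<noteq> 0 \<longrightarrow> w \<in> V \<times> {..<d})) \<and>
       (\<Sum>m\<in>{m. c m \<noteq> 0}. of_rat (c m) *
           (\<Prod>w\<in>V \<times> {..<d}. p (fst w) (snd w) ^ m w)) = 0
       \<longrightarrow> (\<forall>m. c m = 0))"

definition affinely_rigid :: "'v set \<Rightarrow> 'v set set \<Rightarrow> nat \<Rightarrow> ('v \<Rightarrow> nat \<Rightarrow> real) \<Rightarrow> bool" where
  "affinely_rigid V H d p \<longleftrightarrow>
    (\<forall>q. config V d q \<longrightarrow> G_equivalent (affine_group d) H p q \<longrightarrow>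
         G_congruent (affine_group d) V p q)"

definition universally_eucl_rigid :: "'v set \<Rightarrow> 'v set set \<Rightarrow> nat \<Rightarrow> ('v \<Rightarrow> nat \<Rightarrow> real) \<Rightarrow> bool" where
  "universally_eucl_rigid V H d p \<longleftrightarrow>
    (\<forall>d'\<ge>d. \<forall>q. config V d' q \<longrightarrow> G_equivalent (eucl_group d') H p q \<longrightarrow>
         G_congruent (eucl_group d') V p q)"

end

theory Submission
  imports Defs "Jordan_Normal_Form.Determinant"
begin


lemma ms_inj:
  fixes v :: "nat \<Rightarrow> 'v"
  assumes inj: "inj_on v {0..<Suc d}"
  shows "inj_on (\<lambda>\<sigma>. (\<lambda>(u,j). if j < d \<and> (\<exists>k<Suc d. v k = u \<and> \<sigma> k = j) then 1 else (0::nat)))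
           {\<sigma>. \<sigma> permutes {0..<Suc d}}"
proof (rule inj_onI)
  fix \<sigma> \<tau> assume s: "\<sigma> \<in> {\<sigma>. \<sigma> permutes {0..<Suc d}}" and t: "\<tau> \<in> {\<sigma>. \<sigma> permutes {0..<Suc d}}"
    and eq: "(\<lambda>(u,j). if j < d \<and> (\<exists>k<Suc d. v k = u \<and> \<sigma> k = j) then 1 else (0::nat)) =
             (\<lambda>(u,j). if j < d \<and> (\<exists>k<Suc d. v k = u \<and> \<tau> k = j) then 1 else (0::nat))"
  have sp: "\<sigma> permutes {0..<Suc d}" and tp: "\<tau> permutes {0..<Suc d}" using s t by auto
  have key: "\<And>\<sigma> \<tau> k. \<sigma> permutes {0..<Suc d} \<Longrightarrow> \<tau> permutes {0..<Suc d} \<Longrightarrow>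
     (\<lambda>(u,j). if j < d \<and> (\<exists>k<Suc d. v k = u \<and> \<sigma> k = j) then 1 else (0::nat)) =
             (\<lambda>(u,j). if j < d \<and> (\<exists>k<Suc d. v k = u \<and> \<tau> k = j) then 1 else (0::nat))
     \<Longrightarrow> k < Suc d \<Longrightarrow> \<sigma> k < d \<Longrightarrow> \<tau> k = \<sigma> k"
  proof -
    fix \<sigma> \<tau> k assume sp: "\<sigma> permutes {0..<Suc d}" and tp: "\<tau> permutes {0..<Suc d}"
      and eq: "(\<lambda>(u,j). if j < d \<and> (\<exists>k<Suc d. v k = u \<and> \<sigma> k = j) then 1 else (0::nat)) =
             (\<lambda>(u,j). if j < d \<and> (\<exists>k<Suc d. v k = u \<and> \<tau> k = j) then 1 else (0::nat))"
      and k: "k < Suc d" "\<sigma> k < d"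
    from fun_cong[OF eq, of "(v k, \<sigma> k)"] k
    obtain k' where k': "k' < Suc d" "v k' = v k" "\<tau> k' = \<sigma> k"
      by (auto split: if_splits)
    with inj k have "k' = k" by (auto dest: inj_onD)
    with k' show "\<tau> k = \<sigma> k" by simp
  qed
  show "\<sigma> = \<tau>"
  proof
    fix k
    show "\<sigma> k = \<tau> k"
    proof (cases "k < Suc d")
      case False
      then show ?thesis using sp tp by (simp add: permutes_def)
    next
      case True
      have sk: "\<sigma> k < Suc d" using sp True by (simp add: permutes_in_image)
      have tk: "\<tau> k < Suc d" using tp True by (simp add: permutes_in_image)
      show ?thesis
      proof (cases "\<sigma> k < d")
        case True
        then show ?thesis using key[OF sp tp eq] \<open>k < Suc d\<close> by force
      next
        case False
        show ?thesis
        proof (cases "\<tau> k < d")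
          case True
          then have "\<sigma> k = \<tau> k" using key[OF tp sp eq[symmetric]] \<open>k < Suc d\<close> by force
          then show ?thesis by simp
        next
          case False
          then show ?thesis using \<open>\<not> \<sigma> k < d\<close> sk tk by simp
        qed
      qed
    qed
  qed
qed

definition msig :: "(nat \<Rightarrow> 'v) \<Rightarrow> nat \<Rightarrow> (nat \<Rightarrow> nat) \<Rightarrow> ('v \<times> nat \<Rightarrow> nat)" where
  "msig v d \<sigma> = (\<lambda>(u,j). if j < d \<and> (\<exists>k<Suc d. v k = u \<and> \<sigma> k = j) then 1 else (0::nat))"

definition Nmat :: "('v \<Rightarrow> nat \<Rightarrow> real) \<Rightarrow> (nat \<Rightarrow> 'v) \<Rightarrow> nat \<Rightarrow> real mat" where
  "Nmat p v d = mat (Suc d) (Suc d) (\<lambda>(k,j). if j < d then p (v k) j else 1)"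

lemma msig_prod:
  fixes v :: "nat \<Rightarrow> 'v"
  assumes inj: "inj_on v {0..<Suc d}" and sub: "v ` {0..<Suc d} \<subseteq> V"
    and sp: "\<sigma> permutes {0..<Suc d}" and finV: "finite V"
  shows "(\<Prod>w\<in>V \<times> {..<d}. p (fst w) (snd w) ^ msig v d \<sigma> w)
        = (\<Prod>k = 0..<Suc d. (if \<sigma> k < d then p (v k) (\<sigma> k) else 1))"
proof -
  let ?K = "{k\<in>{0..<Suc d}. \<sigma> k < d}"
  let ?T = "(\<lambda>k. (v k, \<sigma> k)) ` ?K"
  have injK: "inj_on (\<lambda>k. (v k, \<sigma> k)) ?K" using inj by (auto simp: inj_on_def)
  have TV: "?T \<subseteq> V \<times> {..<d}" using sub by auto
  have ms: "\<And>w. msig v d \<sigma> w = (if w \<in> ?T then 1 else 0)"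
    unfolding msig_def by (auto split: prod.splits)
  have fin: "finite (V \<times> {..<d})" using finV by simp
  have "(\<Prod>w\<in>V \<times> {..<d}. p (fst w) (snd w) ^ msig v d \<sigma> w)
      = (\<Prod>w\<in>V \<times> {..<d}. if w \<in> ?T then p (fst w) (snd w) else 1)"
    by (rule prod.cong) (auto simp: ms)
  also have "\<dots> = (\<Prod>w\<in>?T. p (fst w) (snd w))"
    using TV fin by (simp add: prod.If_cases Int_absorb1)
  also have "\<dots> = (\<Prod>k\<in>?K. p (v k) (\<sigma> k))"
    by (subst prod.reindex[OF injK]) simp
  also have "\<dots> = (\<Prod>k = 0..<Suc d. (if \<sigma> k < d then p (v k) (\<sigma> k) else 1))"
    by (rule prod.inter_filter) simp
  finally show ?thesis .
qed

lemma det_Nmat_nonzero: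
  fixes v :: "nat \<Rightarrow> 'v"
  assumes gen: "generic_config V d p" and finV: "finite V"
    and inj: "inj_on v {0..<Suc d}" and sub: "v ` {0..<Suc d} \<subseteq> V"
  shows "det (Nmat p v d) \<noteq> 0"
proof
  assume det0: "det (Nmat p v d) = 0"
  let ?P = "{\<sigma>. \<sigma> permutes {0..<Suc d}}"
  define c where "c m = (\<Sum>\<sigma>\<in>{\<sigma>\<in>?P. msig v d \<sigma> = m}. (of_int (sign \<sigma>)::rat))" for m
  have injm: "inj_on (msig v d) ?P" using ms_inj[OF inj] unfolding msig_def by simp
  have finP: "finite ?P" by (simp add: finite_permutations)
  have cms: "c (msig v d \<sigma>) = of_int (sign \<sigma>)" if "\<sigma> \<in> ?P" for \<sigma>
  proof -
    have "{\<tau>\<in>?P. msig v d \<tau> = msig v d \<sigma>} = {\<sigma>}" using that injm by (auto dest: inj_onD)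
    then show ?thesis unfolding c_def by simp
  qed
  have c0: "c m = 0" if "m \<notin> msig v d ` ?P" for m
  proof -
    have e: "{\<tau>\<in>?P. msig v d \<tau> = m} = {}" using that by auto
    show ?thesis unfolding c_def e by simp
  qed
  have supp: "{m. c m \<noteq> 0} = msig v d ` ?P"
  proof
    show "{m. c m \<noteq> 0} \<subseteq> msig v d ` ?P" using c0 by blast
    show "msig v d ` ?P \<subseteq> {m. c m \<noteq> 0}" using cms by auto
  qed
  have A1: "finite {m. c m \<noteq> 0}" using supp finP by simp
  have A2: "\<forall>m. c m \<noteq> 0 \<longrightarrow> (\<forall>w. m w \<noteq> 0 \<longrightarrow> w \<in> V \<times> {..<d})"
  proof (intro allI impI)
    fix m w assume "c m \<noteq> 0" "m w \<noteq> 0"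
    then obtain \<sigma> where s: "\<sigma> \<in> ?P" "m = msig v d \<sigma>" using supp by blast
    with \<open>m w \<noteq> 0\<close> sub show "w \<in> V \<times> {..<d}"
      unfolding msig_def by (auto split: prod.splits if_splits)
  qed
  have "(\<Sum>m\<in>{m. c m \<noteq> 0}. of_rat (c m) * (\<Prod>w\<in>V \<times> {..<d}. p (fst w) (snd w) ^ m w))
      = (\<Sum>\<sigma>\<in>?P. of_rat (c (msig v d \<sigma>)) * (\<Prod>w\<in>V \<times> {..<d}. p (fst w) (snd w) ^ msig v d \<sigma> w))"
    unfolding supp by (rule sum.reindex[OF injm, unfolded comp_def])
  also have "\<dots> = (\<Sum>\<sigma>\<in>?P. of_int (sign \<sigma>) * (\<Prod>k = 0..<Suc d. (if \<sigma> k < d then p (v k) (\<sigma> k) else 1)))"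
    by (rule sum.cong) (auto simp: cms msig_prod[OF inj sub _ finV])
  also have "\<dots> = det (Nmat p v d)"
  proof -
    have "det (Nmat p v d) = (\<Sum>\<sigma>\<in>?P. of_int (sign \<sigma>) * (\<Prod>i = 0..<Suc d. Nmat p v d $$ (i, \<sigma> i)))"
      unfolding det_def Nmat_def by simp
    also have "\<dots> = (\<Sum>\<sigma>\<in>?P. of_int (sign \<sigma>) * (\<Prod>k = 0..<Suc d. (if \<sigma> k < d then p (v k) (\<sigma> k) else 1)))"
    proof (rule sum.cong[OF refl], rule arg_cong[where f="\<lambda>x. _ * x"], rule prod.cong[OF refl])
      fix \<sigma> k assume "\<sigma> \<in> ?P" "k \<in> {0..<Suc d}"
      then have "\<sigma> k < Suc d" by (auto simp: permutes_in_image)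
      with \<open>k \<in> {0..<Suc d}\<close> show "Nmat p v d $$ (k, \<sigma> k) = (if \<sigma> k < d then p (v k) (\<sigma> k) else 1)"
        unfolding Nmat_def by simp
    qed
    finally show ?thesis by simp
  qed
  finally have "(\<Sum>m\<in>{m. c m \<noteq> 0}. of_rat (c m) * (\<Prod>w\<in>V \<times> {..<d}. p (fst w) (snd w) ^ m w)) = 0"
    using det0 by simp
  with gen A1 A2 have "\<forall>m. c m = 0" unfolding generic_config_def by blast
  moreover have "c (msig v d id) = 1" using cms[of id] by (simp add: permutes_id)
  ultimately show False by simp
qed

lemma Nmat_mult:
  assumes "k < Suc d" and "x \<in> carrier_vec (Suc d)"
  shows "(Nmat p v d *\<^sub>v x) $ k = (\<Sum>j<d. p (v k) j * x $ j) + x $ d"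
proof -
  have "(Nmat p v d *\<^sub>v x) $ k = (\<Sum>j\<in>{0..<Suc d}. Nmat p v d $$ (k, j) * x $ j)"
    using assms by (simp add: Nmat_def scalar_prod_def)
  also have "\<dots> = (\<Sum>j<Suc d. (if j < d then p (v k) j else 1) * x $ j)"
    using assms by (intro sum.cong) (auto simp: Nmat_def)
  also have "\<dots> = (\<Sum>j<d. p (v k) j * x $ j) + x $ d"
    by (simp add: lessThan_Suc)
  finally show ?thesis .
qed

lemma Nmat_carrier: "Nmat p v d \<in> carrier_mat (Suc d) (Suc d)"
  by (simp add: Nmat_def)

lemma generic_G2:
  assumes gen: "generic_config V d p" and finV: "finite V"
    and S: "S \<subseteq> V" "card S = Suc d"
    and van: "\<forall>u\<in>S. (\<Sum>l<d. c l * p u l) + c0 = 0"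
  shows "(\<forall>l<d. c l = 0) \<and> c0 = 0"
proof -
  have finS: "finite S" using S finV finite_subset by auto
  obtain v where bv: "bij_betw v {0..<Suc d} S" using ex_bij_betw_nat_finite[OF finS] S by auto
  have inj: "inj_on v {0..<Suc d}" and sub: "v ` {0..<Suc d} \<subseteq> V"
    using bv S by (auto simp: bij_betw_def)
  have dn: "det (Nmat p v d) \<noteq> 0" by (rule det_Nmat_nonzero[OF gen finV inj sub])
  define x where "x = vec (Suc d) (\<lambda>j. if j < d then c j else c0)"
  have xc: "x \<in> carrier_vec (Suc d)" by (simp add: x_def)
  have "Nmat p v d *\<^sub>v x = 0\<^sub>v (Suc d)"
  proof (rule eq_vecI)
    show "dim_vec (Nmat p v d *\<^sub>v x) = dim_vec (0\<^sub>v (Suc d))" by (simp add: Nmat_def)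
    fix k assume "k < dim_vec (0\<^sub>v (Suc d))"
    then have k: "k < Suc d" by simp
    have vk: "v k \<in> S" using bv k by (auto simp: bij_betw_def)
    have "(Nmat p v d *\<^sub>v x) $ k = (\<Sum>j<d. p (v k) j * x $ j) + x $ d" by (rule Nmat_mult[OF k xc])
    also have "\<dots> = (\<Sum>l<d. c l * p (v k) l) + c0"
      by (simp add: x_def mult.commute)
    also have "\<dots> = 0" using van vk by blast
    finally show "(Nmat p v d *\<^sub>v x) $ k = 0\<^sub>v (Suc d) $ k" using k by simp
  qed
  with dn det_0_iff_vec_prod_zero[OF Nmat_carrier[of p v d]] xc have "x = 0\<^sub>v (Suc d)" by blast
  then have xz: "x = 0\<^sub>v (Suc d)" .
  have h: "(if j<d then c j else c0) = 0" if j: "j < Suc d" for j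
  proof -
    have "x $ j = 0" using xz j by simp
    then show ?thesis using j unfolding x_def by simp
  qed
  show ?thesis
  proof (intro conjI allI impI)
    fix l assume "l<d" then show "c l = 0" using h[of l] by simp
  next
    show "c0 = 0" using h[of d] by simp
  qed
qed

lemma generic_G1:
  assumes gen: "generic_config V d p" and finV: "finite V"
    and S: "S \<subseteq> V" "card S = Suc d"
  shows "\<exists>c c0. \<forall>u\<in>S. (\<Sum>l<d. c l * p u l) + c0 = t u"
proof -
  have finS: "finite S" using S finV finite_subset by auto
  obtain v where bv: "bij_betw v {0..<Suc d} S" using ex_bij_betw_nat_finite[OF finS] S by auto
  have inj: "inj_on v {0..<Suc d}" and sub: "v ` {0..<Suc d} \<subseteq> V"
    using bv S by (auto simp: bij_betw_def)
  have dn: "det (Nmat p v d) \<noteq> 0" by (rule det_Nmat_nonzero[OF gen finV inj sub])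
  from det_non_zero_imp_unit[OF Nmat_carrier dn, of undefined]
  obtain B where B: "B \<in> carrier_mat (Suc d) (Suc d)" "Nmat p v d * B = 1\<^sub>m (Suc d)"
    unfolding Units_def ring_mat_def by auto
  define tv where "tv = vec (Suc d) (\<lambda>k. t (v k))"
  define x where "x = B *\<^sub>v tv"
  have xc: "x \<in> carrier_vec (Suc d)" using B by (simp add: x_def tv_def)
  have Nx: "Nmat p v d *\<^sub>v x = tv"
  proof -
    have tc: "tv \<in> carrier_vec (Suc d)" by (simp add: tv_def)
    have "Nmat p v d *\<^sub>v x = (Nmat p v d * B) *\<^sub>v tv"
      unfolding x_def by (rule assoc_mult_mat_vec[symmetric, OF Nmat_carrier B(1) tc])
    also have "\<dots> = tv" using B(2) tc by simp
    finally show ?thesis .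
  qed
  show ?thesis
  proof (intro exI ballI)
    fix u assume "u \<in> S"
    then obtain k where k: "k < Suc d" "v k = u" using bv by (auto simp: bij_betw_def)
    have e: "(Nmat p v d *\<^sub>v x) $ k = (\<Sum>j<d. p (v k) j * x $ j) + x $ d"
      by (rule Nmat_mult[OF k(1) xc])
    have "(\<Sum>l<d. x $ l * p u l) + x $ d = (Nmat p v d *\<^sub>v x) $ k"
      unfolding e k(2)[symmetric] by (simp add: mult.commute)
    also have "\<dots> = t u" using Nx k by (simp add: tv_def)
    finally show "(\<Sum>l<d. x $ l * p u l) + x $ d = t u" .
  qed
qed



definition ipk :: "nat \<Rightarrow> (nat \<Rightarrow> real) \<Rightarrow> (nat \<Rightarrow> real) \<Rightarrow> real" where
  "ipk k x y = (\<Sum>i<k. x i * y i)"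

definition ev :: "nat \<Rightarrow> nat \<Rightarrow> real" where
  "ev j = (\<lambda>i. if i = j then 1 else 0)"

lemma ipk_sym: "ipk k x y = ipk k y x" by (simp add: ipk_def mult.commute)

lemma ipk_lin: "ipk k a (\<lambda>i. \<Sum>j<k. x j * F j i) = (\<Sum>j<k. x j * ipk k a (F j))"
proof -
  have "ipk k a (\<lambda>i. \<Sum>j<k. x j * F j i) = (\<Sum>i<k. \<Sum>j<k. x j * (a i * F j i))"
    unfolding ipk_def by (simp add: sum_distrib_left mult.left_commute)
  also have "\<dots> = (\<Sum>j<k. \<Sum>i<k. x j * (a i * F j i))" by (rule sum.swap)
  also have "\<dots> = (\<Sum>j<k. x j * ipk k a (F j))" unfolding ipk_def by (simp add: sum_distrib_left)
  finally show ?thesis .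
qed

lemma ipk_ev: "j < k \<Longrightarrow> ipk k x (ev j) = x j"
  by (simp add: ipk_def ev_def if_distrib cong: if_cong)

lemma sum_ev: "j < k \<Longrightarrow> (\<Sum>l<k. x l * ev l j) = x j"
  by (simp add: ev_def if_distrib cong: if_cong)

lemma ev_Rk: "j < k \<Longrightarrow> ev j \<in> Rk k" by (simp add: ev_def Rk_def)

lemma sq_diff_sum: "(\<Sum>i<k. (a i - b i)^2) = ipk k a a - 2 * ipk k a b + ipk k b b"
  by (simp add: ipk_def power2_eq_square algebra_simps sum.distrib sum_subtractf sum_distrib_left)

lemma eucl_affine:
  assumes g: "g \<in> eucl_group k"
  shows "\<exists>L b. (\<forall>x\<in>Rk k. \<forall>i<k. g x i = (\<Sum>j<k. L i j * x j) + b i) \<and> (\<forall>i<k. \<forall>j<k. \<bar>L i j\<bar> \<le> 1)"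
proof -
  have dist: "\<And>x y. x \<in> Rk k \<Longrightarrow> y \<in> Rk k \<Longrightarrow> (\<Sum>i<k. (g x i - g y i)^2) = (\<Sum>i<k. (x i - y i)^2)"
    using g unfolding eucl_group_def by blast
  define z :: "nat \<Rightarrow> real" where "z = (\<lambda>_. 0)"
  have z: "z \<in> Rk k" by (simp add: z_def Rk_def)
  define f where "f x = (\<lambda>i. g x i - g z i)" for x
  have fd: "(\<Sum>i<k. (f x i - f y i)^2) = (\<Sum>i<k. (x i - y i)^2)" if "x \<in> Rk k" "y \<in> Rk k" for x y
    using dist[OF that] by (simp add: f_def)
  have fn: "ipk k (f x) (f x) = ipk k x x" if "x \<in> Rk k" for x
    using fd[OF that z] by (simp add: f_def z_def ipk_def power2_eq_square)
  have fip: "ipk k (f x) (f y) = ipk k x y" if "x \<in> Rk k" "y \<in> Rk k" for x y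
    using fd[OF that] sq_diff_sum[where k=k and a="f x" and b="f y"] sq_diff_sum[where k=k and a=x and b=y] fn[OF that(1)] fn[OF that(2)]
    by simp
  define L where "L i j = f (ev j) i" for i j
  have lin: "g x i = (\<Sum>j<k. L i j * x j) + g z i" if x: "x \<in> Rk k" and i: "i < k" for x i
  proof -
    define G where "G = (\<lambda>i. \<Sum>j<k. x j * f (ev j) i)"
    have t2: "ipk k (f x) G = ipk k x x"
    proof -
      have "ipk k (f x) G = (\<Sum>j<k. x j * ipk k (f x) (f (ev j)))" unfolding G_def ipk_lin ..
      also have "\<dots> = (\<Sum>j<k. x j * x j)"
        by (intro sum.cong refl) (simp add: fip[OF x ev_Rk] ipk_ev)
      finally show ?thesis by (simp add: ipk_def)
    qed
    have t3: "ipk k G G = ipk k x x"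
    proof -
      have "ipk k G G = (\<Sum>j<k. x j * ipk k G (f (ev j)))"
        unfolding G_def by (rule ipk_lin)
      also have "\<dots> = (\<Sum>j<k. x j * (\<Sum>l<k. x l * ipk k (f (ev l)) (f (ev j))))"
      proof (intro sum.cong refl arg_cong[where f="\<lambda>t. x _ * t"])
        fix j
        have "ipk k G (f (ev j)) = ipk k (f (ev j)) G" by (rule ipk_sym)
        also have "\<dots> = (\<Sum>l<k. x l * ipk k (f (ev j)) (f (ev l)))" unfolding G_def by (rule ipk_lin)
        also have "\<dots> = (\<Sum>l<k. x l * ipk k (f (ev l)) (f (ev j)))" by (simp add: ipk_sym)
        finally show "ipk k G (f (ev j)) = (\<Sum>l<k. x l * ipk k (f (ev l)) (f (ev j)))" .
      qed
      also have "\<dots> = (\<Sum>j<k. x j * x j)"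
        by (intro sum.cong refl) (simp add: fip ev_Rk ipk_ev sum_ev)
      finally show ?thesis by (simp add: ipk_def)
    qed
    have "(\<Sum>i<k. (f x i - G i)^2) = 0"
      using sq_diff_sum[where k=k and a="f x" and b=G] fn[OF x] t2 t3 by simp
    then have "\<forall>i\<in>{..<k}. (f x i - G i)^2 = 0"
      by (subst sum_nonneg_eq_0_iff[symmetric]) auto
    then have "f x i = G i" using i by simp
    then show ?thesis by (simp add: f_def G_def L_def mult.commute)
  qed
  have bnd: "\<bar>L i j\<bar> \<le> 1" if "i < k" "j < k" for i j
  proof -
    have "ipk k (ev j) (ev j) = 1" using that(2) by (simp add: ipk_ev, simp add: ev_def)
    then have "ipk k (f (ev j)) (f (ev j)) = 1" using fn[OF ev_Rk[OF that(2)]] by simp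
    then have "(\<Sum>i<k. (f (ev j) i)^2) = 1" by (simp add: ipk_def power2_eq_square)
    moreover have "(f (ev j) i)^2 \<le> (\<Sum>i<k. (f (ev j) i)^2)"
      by (rule member_le_sum) (use that in auto)
    ultimately have "(L i j)^2 \<le> 1" by (simp add: L_def)
    then show ?thesis by (simp add: abs_square_le_1)
  qed
  show ?thesis using lin bnd by blast
qed



definition shear :: "nat \<Rightarrow> real \<Rightarrow> (nat \<Rightarrow> real) \<Rightarrow> real \<Rightarrow> (nat \<Rightarrow> real) \<Rightarrow> nat \<Rightarrow> real" where
  "shear d e c c0 x = (\<lambda>j. x j + (if j = 0 then e * ((\<Sum>l<d. c l * x l) + c0) else 0))"

lemma sum_split0: "1 \<le> d \<Longrightarrow> (\<Sum>l<d. f l) = f 0 + (\<Sum>l\<in>{1..<d}. f (l::nat))"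
proof -
  assume "1 \<le> d"
  then have "{..<d} = insert 0 {1..<d}" by auto
  then show ?thesis by simp
qed

lemma shear_affine:
  assumes d: "1 \<le> d" and nz: "1 + e * c 0 \<noteq> 0"
  shows "shear d e c c0 \<in> affine_group d"
proof -
  define R where "R x = (\<Sum>l\<in>{1..<d}. c l * x l)" for x :: "nat \<Rightarrow> real"
  have Rcong: "R x = R y" if "\<And>l. l \<noteq> 0 \<Longrightarrow> x l = y l" for x y
    unfolding R_def by (intro sum.cong) (auto simp: that)
  have sh0: "shear d e c c0 x 0 = (1 + e * c 0) * x 0 + e * (R x + c0)" for x
    unfolding shear_def R_def using sum_split0[OF d, of "\<lambda>l. c l * x l"] by (simp add: algebra_simps)
  define \<psi> where "\<psi> y = (\<lambda>j. if j = 0 then (y 0 - e * (R y + c0)) / (1 + e * c 0) else y j)" for y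
  have shj: "shear d e c c0 x j = x j" if "j \<noteq> 0" for x j using that by (simp add: shear_def)
  have bij: "bij_betw (shear d e c c0) (Rk d) (Rk d)"
  proof (rule bij_betw_byWitness[where f'=\<psi>])
    show "\<forall>x\<in>Rk d. \<psi> (shear d e c c0 x) = x"
    proof
      fix x
      have "R (shear d e c c0 x) = R x" by (rule Rcong) (simp add: shj)
      then show "\<psi> (shear d e c c0 x) = x"
        using nz by (auto simp: \<psi>_def sh0 shj field_simps)
    qed
    show "\<forall>y\<in>Rk d. shear d e c c0 (\<psi> y) = y"
    proof
      fix y
      have Ry: "R (\<psi> y) = R y" by (rule Rcong) (simp add: \<psi>_def)
      show "shear d e c c0 (\<psi> y) = y"
      proof
        fix j show "shear d e c c0 (\<psi> y) j = y j"
        proof (cases "j = 0")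
          case True
          have "shear d e c c0 (\<psi> y) 0 = (1 + e * c 0) * ((y 0 - e * (R y + c0)) / (1 + e * c 0)) + e * (R y + c0)"
            unfolding sh0 Ry by (simp add: \<psi>_def)
          also have "\<dots> = y 0" using nz by simp
          finally show ?thesis using True by simp
        next
          case False then show ?thesis by (simp add: shj \<psi>_def)
        qed
      qed
    qed
    show "shear d e c c0 ` Rk d \<subseteq> Rk d" using d by (auto simp: Rk_def shear_def)
    show "\<psi> ` Rk d \<subseteq> Rk d" using d by (auto simp: Rk_def \<psi>_def)
  qed
  define A where "A (j::nat) (l::nat) = (if j = l then 1 else 0) + (if j = 0 then e * c l else 0)" for j l
  define b where "b (j::nat) = (if j = 0 then e * c0 else 0)" for j
  have aff: "\<forall>x\<in>Rk d. \<forall>j<d. shear d e c c0 x j = (\<Sum>l<d. A j l * x l) + b j"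
  proof (intro ballI allI impI)
    fix x j assume "x \<in> Rk d" "j < d"
    have "(\<Sum>l<d. A j l * x l) = (\<Sum>l<d. (if j = l then x l else 0) + (if j = 0 then e * (c l * x l) else 0))"
      by (intro sum.cong) (auto simp: A_def algebra_simps)
    also have "\<dots> = (\<Sum>l<d. (if j = l then x l else 0)) + (\<Sum>l<d. (if j = 0 then e * (c l * x l) else 0))"
      by (rule sum.distrib)
    also have "\<dots> = x j + (if j = 0 then e * (\<Sum>l<d. c l * x l) else 0)"
      using \<open>j < d\<close> by (cases "j = 0") (simp_all add: sum_distrib_left)
    finally show "shear d e c c0 x j = (\<Sum>l<d. A j l * x l) + b j"
      by (simp add: shear_def b_def algebra_simps)
  qed
  show ?thesis unfolding affine_group_def using bij aff by blast
qed



lemma sum_Rk: assumes "x \<in> Rk d" "d \<le> d'"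
  shows "(\<Sum>j<d'. L j * x j) = (\<Sum>j<d. L j * x j)"
proof (rule sum.mono_neutral_right)
  show "\<forall>i\<in>{..<d'} - {..<d}. L i * x i = 0" using assms by (auto simp: Rk_def)
qed (use assms in auto)

lemma Rk_mono: "x \<in> Rk d \<Longrightarrow> d \<le> d' \<Longrightarrow> x \<in> Rk d'"
  by (auto simp: Rk_def)

lemma eucl_affine_d:
  assumes g: "g \<in> eucl_group d'" and dd: "d \<le> d'"
  shows "\<exists>L b. (\<forall>x\<in>Rk d. \<forall>i<d'. g x i = (\<Sum>j<d. L i j * x j) + b i) \<and> (\<forall>i<d'. \<forall>j<d'. \<bar>L i j\<bar> \<le> 1)"
proof -
  obtain L b where Lb: "\<forall>x\<in>Rk d'. \<forall>i<d'. g x i = (\<Sum>j<d'. L i j * x j) + b i"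
    "\<forall>i<d'. \<forall>j<d'. \<bar>L i j\<bar> \<le> 1" using eucl_affine[OF g] by blast
  have "\<forall>x\<in>Rk d. \<forall>i<d'. g x i = (\<Sum>j<d. L i j * x j) + b i"
    using Lb(1) Rk_mono[OF _ dd] sum_Rk[OF _ dd] by simp
  with Lb(2) show ?thesis by blast
qed

lemma extend_subset:
  assumes "finite V" "S \<subseteq> V" "card S \<le> n" "n \<le> card V"
  shows "\<exists>S'. S \<subseteq> S' \<and> S' \<subseteq> V \<and> card S' = n"
proof -
  have fS: "finite S" using assms finite_subset by blast
  have "n - card S \<le> card (V - S)" using assms fS by (simp add: card_Diff_subset)
  then obtain T where T: "T \<subseteq> V - S" "card T = n - card S" by (meson obtain_subset_with_card_n)
  have fT: "finite T" using T assms finite_subset by (meson finite_Diff)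
  have "card (S \<union> T) = card S + card T" using T fS fT by (subst card_Un_disjoint) auto
  then show ?thesis using T assms by (intro exI[of _ "S \<union> T"]) auto
qed

lemma shear_apply: "shear d e c c0 x j = x j + (if j = 0 then e * ((\<Sum>l<d. c l * x l) + c0) else 0)"
  by (simp add: shear_def)

lemma sum_delta0: "1 \<le> (d::nat) \<Longrightarrow> (\<Sum>l<d. (if l = 0 then a else 0) * x l) = a * (x 0::real)"
proof -
  assume d: "1 \<le> d"
  have "(\<Sum>l<d. (if l = 0 then a else 0) * x l) = (\<Sum>l<d. if l = 0 then a * x l else 0)"
    by (intro sum.cong) auto
  also have "\<dots> = a * x 0" using d by (simp add: sum.delta)
  finally show ?thesis .
qed

lemma global_affine:
  assumes d1: "1 \<le> d" and pc: "config V d p" and ar: "affinely_rigid V H d p"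
    and hyp: "\<forall>h\<in>H. \<exists>L b. (\<forall>u\<in>h. q u i = (\<Sum>j<d. L j * p u j) + b) \<and> \<bar>L 0\<bar> \<le> 1"
  shows "\<exists>M m. \<forall>u\<in>V. q u i = (\<Sum>l<d. M l * p u l) + m"
proof -
  define q' where "q' u = (\<lambda>j. p u j + (if j = 0 then (1/2) * q u i else 0))" for u
  have cq': "config V d q'" using pc d1 by (auto simp: config_def Rk_def q'_def)
  have eq': "G_equivalent (affine_group d) H p q'"
    unfolding G_equivalent_def
  proof
    fix h assume "h \<in> H"
    then obtain L b where Lb: "\<forall>u\<in>h. q u i = (\<Sum>j<d. L j * p u j) + b" "\<bar>L 0\<bar> \<le> 1"
      using hyp by blast
    have nz: "1 + (1/2) * L 0 \<noteq> 0" using Lb(2) by auto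
    show "\<exists>g\<in>affine_group d. \<forall>u\<in>h. g (p u) = q' u"
    proof (intro bexI ballI)
      show "shear d (1/2) L b \<in> affine_group d" by (rule shear_affine[where c=L and d=d and e="1/2"]) (use d1 nz in auto)
      fix u assume "u \<in> h"
      then show "shear d (1/2) L b (p u) = q' u" using Lb(1) by (auto simp: shear_def q'_def)
    qed
  qed
  obtain a where a: "a \<in> affine_group d" "\<forall>u\<in>V. a (p u) = q' u"
    using ar cq' eq' unfolding affinely_rigid_def G_congruent_def by blast
  obtain A b where Ab: "\<forall>x\<in>Rk d. \<forall>j<d. a x j = (\<Sum>l<d. A j l * x l) + b j"
    using a(1) unfolding affine_group_def by blast
  show ?thesis
  proof (intro exI ballI)
    fix u assume u: "u \<in> V"
    have pu: "p u \<in> Rk d" using pc u by (simp add: config_def)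
    have "p u 0 + (1/2) * q u i = q' u 0" by (simp add: q'_def)
    also have "\<dots> = a (p u) 0" using a(2) u by simp
    also have "\<dots> = (\<Sum>l<d. A 0 l * p u l) + b 0" using Ab pu d1 by simp
    finally have e: "p u 0 + (1/2) * q u i = (\<Sum>l<d. A 0 l * p u l) + b 0" .
    have "(\<Sum>l<d. (2 * A 0 l - (if l = 0 then 2 else 0)) * p u l) =
          2 * (\<Sum>l<d. A 0 l * p u l) - (\<Sum>l<d. (if l = 0 then 2 else 0) * p u l)"
      by (simp add: algebra_simps sum_subtractf sum_distrib_left)
    also have "\<dots> = 2 * (\<Sum>l<d. A 0 l * p u l) - 2 * p u 0"
      using sum_delta0[OF d1, of 2 "p u"] by simp
    finally show "q u i = (\<Sum>l<d. (2 * A 0 l - (if l = 0 then 2 else 0)) * p u l) + 2 * b 0"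
      using e by simp
  qed
qed

lemma sum_minus_delta: "1 \<le> (d::nat) \<Longrightarrow>
  (\<Sum>l<d. (A l - (if l = 0 then 1 else 0)) * x l) = (\<Sum>l<d. A l * x l) - (x 0::real)"
  using sum_delta0[of d 1 x] by (simp add: left_diff_distrib sum_subtractf)

lemma big_edge:
  assumes hg: "hypergraph V H" and d1: "1 \<le> d" and cardV: "card V \<ge> d + 2"
    and pc: "config V d p" and gen: "generic_config V d p" and ar: "affinely_rigid V H d p"
  shows "\<exists>h\<in>H. card h \<ge> Suc d"
proof (rule ccontr)
  assume "\<not> ?thesis"
  then have small: "\<forall>h\<in>H. card h \<le> d" by auto
  have finV: "finite V" using hg by (simp add: hypergraph_def)
  have hV: "\<forall>h\<in>H. h \<subseteq> V" using hg by (simp add: hypergraph_def)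
  have "V \<noteq> {}" using cardV by auto
  then obtain w where w: "w \<in> V" by blast
  have "\<forall>h\<in>H. \<exists>cc::(nat\<Rightarrow>real)\<times>real. \<forall>u\<in>insert w h. (\<Sum>l<d. fst cc l * p u l) + snd cc = (if u = w then 1 else 0)"
  proof
    fix h assume h: "h \<in> H"
    have sub: "insert w h \<subseteq> V" using h hV w by auto
    have fh: "finite h" using sub finV finite_subset by auto
    have "card (insert w h) \<le> Suc d" using small h fh by (simp add: card_insert_if) (metis le_SucI)
    then obtain S' where S': "insert w h \<subseteq> S'" "S' \<subseteq> V" "card S' = Suc d"
      using extend_subset[OF finV sub, of "Suc d"] cardV by auto
    obtain c c0 where cc: "\<forall>u\<in>S'. (\<Sum>l<d. c l * p u l) + c0 = (if u = w then 1 else 0)"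
      using generic_G1[OF gen finV S'(2,3), of "\<lambda>u. if u = w then 1 else 0"] by blast
    show "\<exists>cc::(nat\<Rightarrow>real)\<times>real. \<forall>u\<in>insert w h. (\<Sum>l<d. fst cc l * p u l) + snd cc = (if u = w then 1 else 0)"
      using cc S'(1) by (intro exI[of _ "(c, c0)"]) auto
  qed
  then obtain C where C: "\<forall>h\<in>H. \<forall>u\<in>insert w h. (\<Sum>l<d. fst (C h) l * p u l) + snd (C h) = (if u = w then 1 else 0)"
    by metis
  have finH: "finite H" using hV finV by (meson Pow_iff finite_Pow_iff finite_subset subsetI)
  define K where "K = (\<Sum>h\<in>H. \<bar>fst (C h) 0\<bar>)"
  have K0: "K \<ge> 0" unfolding K_def by (simp add: sum_nonneg)
  define \<delta> where "\<delta> = 1 / (1 + K)"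
  have dpos: "\<delta> > 0" using K0 by (simp add: \<delta>_def)
  have nz: "1 + \<delta> * fst (C h) 0 \<noteq> 0" if h: "h \<in> H" for h
  proof -
    have "\<bar>fst (C h) 0\<bar> \<le> K" unfolding K_def by (rule member_le_sum) (use h finH in auto)
    then have "\<bar>\<delta> * fst (C h) 0\<bar> < 1" using K0 dpos
      by (simp add: \<delta>_def abs_mult field_simps)
    then show ?thesis by linarith
  qed
  define q'' where "q'' u = (\<lambda>j. p u j + (if j = 0 then (if u = w then \<delta> else 0) else 0))" for u
  have cq: "config V d q''" using pc d1 by (auto simp: config_def Rk_def q''_def)
  have eq: "G_equivalent (affine_group d) H p q''"
    unfolding G_equivalent_def
  proof
    fix h assume h: "h \<in> H"
    show "\<exists>g\<in>affine_group d. \<forall>u\<in>h. g (p u) = q'' u"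
    proof (intro bexI ballI)
      show "shear d \<delta> (fst (C h)) (snd (C h)) \<in> affine_group d"
        by (rule shear_affine[where c="fst (C h)" and d=d and e=\<delta>]) (use d1 nz h in auto)
      fix u assume "u \<in> h"
      then have "(\<Sum>l<d. fst (C h) l * p u l) + snd (C h) = (if u = w then 1 else 0)"
        using C h by blast
      then show "shear d \<delta> (fst (C h)) (snd (C h)) (p u) = q'' u"
        by (auto simp: shear_def q''_def)
    qed
  qed
  obtain a where a: "a \<in> affine_group d" "\<forall>u\<in>V. a (p u) = q'' u"
    using ar cq eq unfolding affinely_rigid_def G_congruent_def by blast
  obtain A b where Ab: "\<forall>x\<in>Rk d. \<forall>j<d. a x j = (\<Sum>l<d. A j l * x l) + b j"
    using a(1) unfolding affine_group_def by blast
  have a0: "a (p u) 0 = (\<Sum>l<d. A 0 l * p u l) + b 0" if "u \<in> V" for u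
    using Ab pc that d1 by (simp add: config_def)
  have "card (V - {w}) \<ge> Suc d" using cardV w finV by (simp add: card_Diff_singleton)
  then obtain S2 where S2: "S2 \<subseteq> V - {w}" "card S2 = Suc d" by (meson obtain_subset_with_card_n)
  have van: "\<forall>u\<in>S2. (\<Sum>l<d. (A 0 l - (if l = 0 then 1 else 0)) * p u l) + b 0 = 0"
  proof
    fix u assume u: "u \<in> S2"
    then have uV: "u \<in> V" and uw: "u \<noteq> w" using S2 by auto
    have "(\<Sum>l<d. A 0 l * p u l) + b 0 = p u 0" using a0[OF uV] a(2) uV uw by (simp add: q''_def)
    then show "(\<Sum>l<d. (A 0 l - (if l = 0 then 1 else 0)) * p u l) + b 0 = 0"
      using sum_minus_delta[OF d1, of "A 0" "p u"] by simp
  qed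
  have zz: "(\<forall>l<d. A 0 l - (if l = 0 then 1 else 0) = 0) \<and> b 0 = 0"
    by (rule generic_G2[OF gen finV _ S2(2) van]) (use S2 in auto)
  have "(\<Sum>l<d. (A 0 l - (if l = 0 then 1 else 0)) * p w l) = 0" using zz by simp
  then have "a (p w) 0 = p w 0" using a0[OF w] sum_minus_delta[OF d1, of "A 0" "p w"] zz by simp
  moreover have "a (p w) 0 = p w 0 + \<delta>" using a(2) w by (simp add: q''_def)
  ultimately show False using dpos by simp
qed

theorem corollary4p3:
  fixes V :: "'v set" and H :: "'v set set" and d :: nat and p :: "'v \<Rightarrow> nat \<Rightarrow> real"
  assumes "hypergraph V H"
    and "d \<ge> 1"
    and "card V \<ge> d + 2"
    and "config V d p"
    and "generic_config V d p"
    and "affinely_rigid V H d p"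
  shows "universally_eucl_rigid V H d p"
  unfolding universally_eucl_rigid_def
proof (intro allI impI)
  note hg = assms(1) and d1 = assms(2) and cardV = assms(3) and pc = assms(4)
    and gen = assms(5) and ar = assms(6)
  fix d' q assume dd: "d \<le> d'" and cq: "config V d' q" and eqv: "G_equivalent (eucl_group d') H p q"
  have finV: "finite V" using hg by (simp add: hypergraph_def)
  have hV: "\<forall>h\<in>H. h \<subseteq> V" using hg by (simp add: hypergraph_def)
  have pRk: "p u \<in> Rk d" if "u \<in> V" for u using pc that by (simp add: config_def)
  have hypaff: "\<exists>L b. (\<forall>u\<in>h. q u i = (\<Sum>j<d. L j * p u j) + b) \<and> \<bar>L 0\<bar> \<le> 1"
    if h: "h \<in> H" and i: "i < d'" for h i
  proof -
    obtain g where g: "g \<in> eucl_group d'" "\<forall>u\<in>h. g (p u) = q u"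
      using eqv h unfolding G_equivalent_def by blast
    obtain L b where Lb: "\<forall>x\<in>Rk d. \<forall>i<d'. g x i = (\<Sum>j<d. L i j * x j) + b i"
      "\<forall>i<d'. \<forall>j<d'. \<bar>L i j\<bar> \<le> 1" using eucl_affine_d[OF g(1) dd] by blast
    show ?thesis
    proof (intro exI conjI ballI)
      fix u assume "u \<in> h"
      then show "q u i = (\<Sum>j<d. L i j * p u j) + b i"
        using g(2) Lb(1) pRk hV h i by force
    next
      show "\<bar>L i 0\<bar> \<le> 1" using Lb(2) i d1 dd by simp
    qed
  qed
  have "\<forall>i. \<exists>Mm::(nat\<Rightarrow>real)\<times>real. i < d' \<longrightarrow> (\<forall>u\<in>V. q u i = (\<Sum>l<d. fst Mm l * p u l) + snd Mm)"
  proof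
    fix i
    show "\<exists>Mm::(nat\<Rightarrow>real)\<times>real. i < d' \<longrightarrow> (\<forall>u\<in>V. q u i = (\<Sum>l<d. fst Mm l * p u l) + snd Mm)"
    proof (cases "i < d'")
      case True
      obtain M m where "\<forall>u\<in>V. q u i = (\<Sum>l<d. M l * p u l) + m"
        using global_affine[OF d1 pc ar, of q i] hypaff True by blast
      then show ?thesis by (intro exI[of _ "(M, m)"]) auto
    qed auto
  qed
  then obtain Mm where Mm: "\<And>i u. i < d' \<Longrightarrow> u \<in> V \<Longrightarrow> q u i = (\<Sum>l<d. fst (Mm i) l * p u l) + snd (Mm i)"
    by metis
  obtain h0 where h0: "h0 \<in> H" "card h0 \<ge> Suc d" using big_edge[OF hg d1 cardV pc gen ar] by blast
  obtain S where S: "S \<subseteq> h0" "card S = Suc d" using h0(2) by (meson obtain_subset_with_card_n)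
  have SV: "S \<subseteq> V" using S h0 hV by auto
  obtain g where g: "g \<in> eucl_group d'" "\<forall>u\<in>h0. g (p u) = q u"
    using eqv h0 unfolding G_equivalent_def by blast
  obtain L b where Lb: "\<forall>x\<in>Rk d. \<forall>i<d'. g x i = (\<Sum>j<d. L i j * x j) + b i"
    using eucl_affine_d[OF g(1) dd] by blast
  have agree: "g (p u) i = q u i" if u: "u \<in> V" and i: "i < d'" for u i
  proof -
    have van: "\<forall>v\<in>S. (\<Sum>l<d. (L i l - fst (Mm i) l) * p v l) + (b i - snd (Mm i)) = 0"
    proof
      fix v assume v: "v \<in> S"
      then have vV: "v \<in> V" and vh: "v \<in> h0" using S SV by auto
      have e1: "g (p v) i = (\<Sum>l<d. L i l * p v l) + b i" using Lb pRk[OF vV] i by blast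
      have e2: "g (p v) = q v" using g(2) vh by blast
      have "(\<Sum>l<d. L i l * p v l) + b i = (\<Sum>l<d. fst (Mm i) l * p v l) + snd (Mm i)"
        using e1 e2 Mm[OF i vV] by simp
      then show "(\<Sum>l<d. (L i l - fst (Mm i) l) * p v l) + (b i - snd (Mm i)) = 0"
        by (simp add: left_diff_distrib sum_subtractf)
    qed
    have zz: "(\<forall>l<d. L i l - fst (Mm i) l = 0) \<and> b i - snd (Mm i) = 0"
      by (rule generic_G2[OF gen finV SV S(2) van])
    have "(\<Sum>l<d. L i l * p u l) = (\<Sum>l<d. fst (Mm i) l * p u l)"
      using zz by (intro sum.cong) auto
    moreover have "g (p u) i = (\<Sum>l<d. L i l * p u l) + b i" using Lb pRk[OF u] i by blast
    ultimately show ?thesis using Mm[OF i u] zz by simp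
  qed
  have "g (p u) = q u" if u: "u \<in> V" for u
  proof
    fix i show "g (p u) i = q u i"
    proof (cases "i < d'")
      case True then show ?thesis using agree u by blast
    next
      case False
      have "p u \<in> Rk d'" using pRk[OF u] dd by (rule Rk_mono)
      then have "g (p u) \<in> Rk d'" using g(1) unfolding eucl_group_def bij_betw_def by blast
      moreover have "q u \<in> Rk d'" using cq u by (simp add: config_def)
      ultimately show ?thesis using False by (simp add: Rk_def)
    qed
  qed
  then show "G_congruent (eucl_group d') V p q" unfolding G_congruent_def using g(1) by blast
qed

end
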